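(* Let $d$ be a positive integer and let $(A_{R,n})_{R,n\in\mathbb{N}}$ be a two-parameter sequence in a normed space with $\|A_{R,n}\|\le1$ for all $R,n$. Let $L\in\mathcal{H}$ be eventually positive with $1\prec L(t)\prec t$, and assume that for some $C>0$, $$\limsup_{R\to+\infty}\mathop{\mathbb{E}}_{1\le r\le R}\Big\|\mathop{\mathbb{E}}_{r\le n\le r+L(r)}A_{R,n}\Big\|^d\le C.$$ Then $\limsup_{R\to+\infty}\big\|\mathop{\mathbb{E}}_{1\le n\le R}A_{R,n}\big\|\le C^{1/d}$.
   Context: $\mathcal{H}$ is a fixed Hardy field (subfield of germs at $+\infty$ of real functions, closed under differentiation) containing the logarithmico-exponential functions, closed under composition and compositional inversion. $f\prec g$ means $f(t)/g(t)\to0$. $\mathbb{E}_{1\le n\le x}a(n)=\frac{1}{\lfloor x\rfloor}\sum_{n=1}^{\lfloor x\rfloor}a(n)$, and $\mathbb{E}_{r\le n\le r+L(r)}$ denotes the average over the integers $n$ in $[r,r+L(r)]$. *)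

theory Defs
  imports "HOL-Analysis.Analysis"
begin

(* Germs at +infinity are represented by functions real => real; equality of germs
   is eventual equality at_top. *)

definition hardy_field :: "(real \<Rightarrow> real) set \<Rightarrow> bool" where
  "hardy_field F \<longleftrightarrow>
     (\<forall>c. (\<lambda>_. c) \<in> F) \<and>
     (\<forall>f\<in>F. \<forall>g\<in>F. \<exists>h\<in>F. eventually (\<lambda>x. h x = f x + g x) at_top) \<and>
     (\<forall>f\<in>F. \<forall>g\<in>F. \<exists>h\<in>F. eventually (\<lambda>x. h x = f x * g x) at_top) \<and>
     (\<forall>f\<in>F. \<exists>h\<in>F. eventually (\<lambda>x. h x = - f x) at_top) \<and>
     (\<forall>f\<in>F. \<not> eventually (\<lambda>x. f x = 0) at_top \<longrightarrow>
        (\<exists>h\<in>F. eventually (\<lambda>x. f x * h x = 1) at_top)) \<and>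
     (\<forall>f\<in>F. eventually (\<lambda>x. f differentiable at x) at_top \<and>
        (\<exists>h\<in>F. eventually (\<lambda>x. deriv f x = h x) at_top))"

definition standing_hardy_field :: "(real \<Rightarrow> real) set \<Rightarrow> bool" where
  "standing_hardy_field H \<longleftrightarrow>
     hardy_field H \<and>
     (\<lambda>x. x) \<in> H \<and>
     (\<forall>f\<in>H. \<exists>h\<in>H. eventually (\<lambda>x. h x = exp (f x)) at_top) \<and>
     (\<forall>f\<in>H. eventually (\<lambda>x. f x > 0) at_top \<longrightarrow>
        (\<exists>h\<in>H. eventually (\<lambda>x. h x = ln (f x)) at_top)) \<and>
     (\<forall>f\<in>H. \<forall>g\<in>H. filterlim g at_top at_top \<longrightarrow>
        (\<exists>h\<in>H. eventually (\<lambda>x. h x = f (g x)) at_top)) \<and>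
     (\<forall>f\<in>H. filterlim f at_top at_top \<longrightarrow>
        (\<exists>g\<in>H. filterlim g at_top at_top \<and> eventually (\<lambda>x. f (g x) = x) at_top))"

definition avg_upto :: "nat \<Rightarrow> (nat \<Rightarrow> 'a::real_normed_vector) \<Rightarrow> 'a" where
  "avg_upto R a = (1 / real R) *\<^sub>R (\<Sum>n=1..R. a n)"

definition short_avg :: "(real \<Rightarrow> real) \<Rightarrow> nat \<Rightarrow> (nat \<Rightarrow> 'a::real_normed_vector) \<Rightarrow> 'a" where
  "short_avg L r a =
     (let S = {n::nat. real r \<le> real n \<and> real n \<le> real r + L (real r)}
      in (1 / real (card S)) *\<^sub>R (\<Sum>n\<in>S. a n))"

end

theory Submission
  imports Defs
begin

lemma mvt_upper:
  fixes f f' :: "real \<Rightarrow> real"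
  assumes d: "\<And>x. x \<ge> a \<Longrightarrow> DERIV f x :> f' x" and c: "\<And>x. x \<ge> a \<Longrightarrow> f' x \<le> c" and ab: "a \<le> b"
  shows "f b - f a \<le> c * (b - a)"
proof (cases "a = b")
  case True then show ?thesis by simp
next
  case False
  then have "a < b" using ab by simp
  then obtain z where z: "a < z" "z < b" "f b - f a = (b - a) * f' z"
    using MVT2[of a b f f'] d by auto
  have "f' z \<le> c" using c z by simp
  then show ?thesis using z \<open>a < b\<close> by (simp add: mult.commute mult_left_mono)
qed

lemma mvt_lower:
  fixes f f' :: "real \<Rightarrow> real"
  assumes d: "\<And>x. x \<ge> a \<Longrightarrow> DERIV f x :> f' x" and c: "\<And>x. x \<ge> a \<Longrightarrow> c \<le> f' x" and ab: "a \<le> b"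
  shows "c * (b - a) \<le> f b - f a"
proof (cases "a = b")
  case True then show ?thesis by simp
next
  case False
  then have "a < b" using ab by simp
  then obtain z where z: "a < z" "z < b" "f b - f a = (b - a) * f' z"
    using MVT2[of a b f f'] d by auto
  have "c \<le> f' z" using c z by simp
  then show ?thesis using z \<open>a < b\<close> by (simp add: mult.commute mult_left_mono)
qed

lemma hardy_deriv:
  assumes "hardy_field H" "f \<in> H"
  shows "\<exists>h\<in>H. eventually (\<lambda>x. f differentiable at x \<and> deriv f x = h x) at_top"
proof -
  from assms have "eventually (\<lambda>x. f differentiable at x) at_top \<and>
        (\<exists>h\<in>H. eventually (\<lambda>x. deriv f x = h x) at_top)"
    unfolding hardy_field_def by blast
  then show ?thesis by (auto intro: eventually_conj)
qed

lemma hardy_sign: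
  assumes "hardy_field H" "g \<in> H"
  shows "eventually (\<lambda>x. g x = 0) at_top \<or> eventually (\<lambda>x. g x \<noteq> 0) at_top"
proof (cases "eventually (\<lambda>x. g x = 0) at_top")
  case False
  with assms obtain k where "eventually (\<lambda>x. g x * k x = 1) at_top"
    unfolding hardy_field_def by blast
  then have "eventually (\<lambda>x. g x \<noteq> 0) at_top"
    by (rule eventually_mono) auto
  then show ?thesis by simp
qed simp

lemma L_deriv_small:
  fixes L :: "real \<Rightarrow> real"
  assumes H: "hardy_field H" and L_in: "L \<in> H" and Ltop: "filterlim L at_top at_top"
    and L_sub: "((\<lambda>t. L t / t) \<longlongrightarrow> 0) at_top"
  shows "\<exists>h T. (\<forall>x\<ge>T. DERIV L x :> h x) \<and> (\<forall>e>0. \<exists>T'. \<forall>x\<ge>T'. 0 \<le> h x \<and> h x \<le> e)"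
proof -
  obtain h where hH: "h \<in> H" and ev1: "eventually (\<lambda>x. L differentiable at x \<and> deriv L x = h x) at_top"
    using hardy_deriv[OF H L_in] by blast
  obtain g where gH: "g \<in> H" and ev2: "eventually (\<lambda>x. h differentiable at x \<and> deriv h x = g x) at_top"
    using hardy_deriv[OF H hH] by blast
  obtain g2 where ev3: "eventually (\<lambda>x. g differentiable at x \<and> deriv g x = g2 x) at_top"
    using hardy_deriv[OF H gH] by blast
  obtain T0 where T0: "\<And>x. x \<ge> T0 \<Longrightarrow> (L differentiable at x \<and> deriv L x = h x) \<and>
      (h differentiable at x \<and> deriv h x = g x) \<and> (g differentiable at x \<and> deriv g x = g2 x)"
    using eventually_conj[OF ev1 eventually_conj[OF ev2 ev3]] unfolding eventually_at_top_linorder by blast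
  have dL: "DERIV L x :> h x" if "x \<ge> T0" for x
  proof -
    have d: "L differentiable at x" and eq: "deriv L x = h x" using T0[OF that] by auto
    have "DERIV L x :> deriv L x" using DERIV_deriv_iff_real_differentiable d by blast
    then show ?thesis by (simp only: eq)
  qed
  have dh: "DERIV h x :> g x" if "x \<ge> T0" for x
  proof -
    have d: "h differentiable at x" and eq: "deriv h x = g x" using T0[OF that] by auto
    have "DERIV h x :> deriv h x" using DERIV_deriv_iff_real_differentiable d by blast
    then show ?thesis by (simp only: eq)
  qed
  have gc: "continuous_on {a..b} g" if "a \<ge> T0" for a b
    using T0 that by (intro continuous_at_imp_continuous_on ballI differentiable_imp_continuous_within) auto
  have L1: False if x1: "x1 \<ge> T0" and hle: "\<And>t. t \<ge> x1 \<Longrightarrow> h t \<le> 0" for x1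
  proof -
    have le: "L t - L x1 \<le> 0 * (t - x1)" if "t \<ge> x1" for t
      by (rule mvt_upper[where f' = h]) (use x1 dL hle that in auto)
    from Ltop have "eventually (\<lambda>t. L t > L x1) at_top" by (simp add: filterlim_at_top_dense)
    then obtain t0 where "\<And>t. t \<ge> t0 \<Longrightarrow> L t > L x1" unfolding eventually_at_top_linorder by blast
    then have "L (max t0 x1) > L x1" by simp
    moreover have "L (max t0 x1) - L x1 \<le> 0" using le[of "max t0 x1"] by simp
    ultimately show False by simp
  qed
  have L2: False if x1: "x1 \<ge> T0" and c: "c > 0" and hge: "\<And>t. t \<ge> x1 \<Longrightarrow> c \<le> h t" for x1 c
  proof -
    have ge: "c * (t - x1) \<le> L t - L x1" if "t \<ge> x1" for t
      by (rule mvt_lower[where f' = h]) (use x1 dL hge that in auto)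
    have "eventually (\<lambda>t. L t / t < c / 2) at_top"
      using L_sub c by (intro order_tendstoD) auto
    moreover have "eventually (\<lambda>t. t \<ge> max 1 (max x1 (2 * (\<bar>L x1\<bar> + c * \<bar>x1\<bar>) / c + 1))) at_top"
      by (rule eventually_ge_at_top)
    ultimately have "eventually (\<lambda>t. L t / t < c / 2 \<and> t \<ge> max 1 (max x1 (2 * (\<bar>L x1\<bar> + c * \<bar>x1\<bar>) / c + 1))) at_top"
      by (rule eventually_conj)
    then obtain N where N: "\<And>t. t \<ge> N \<Longrightarrow> L t / t < c / 2 \<and> t \<ge> max 1 (max x1 (2 * (\<bar>L x1\<bar> + c * \<bar>x1\<bar>) / c + 1))"
      unfolding eventually_at_top_linorder by blast
    define t where "t = N"
    have t1: "L t / t < c / 2" and t2: "t \<ge> max 1 (max x1 (2 * (\<bar>L x1\<bar> + c * \<bar>x1\<bar>) / c + 1))"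
      using N[of N] unfolding t_def by auto
    have tpos: "t > 0" using t2 by simp
    have a1: "L t < c / 2 * t" using t1 tpos by (simp add: divide_less_eq)
    have a2: "c * (t - x1) \<le> L t - L x1" using ge t2 by simp
    have "t \<ge> 2 * (\<bar>L x1\<bar> + c * \<bar>x1\<bar>) / c + 1" using t2 by simp
    then have a3: "c * t \<ge> 2 * (\<bar>L x1\<bar> + c * \<bar>x1\<bar>) + c" using c by (simp add: field_simps)
    have a4: "c * x1 \<le> c * \<bar>x1\<bar>" using c by (intro mult_left_mono) auto
    have a5: "c * (t - x1) = c * t - c * x1" by (simp add: algebra_simps)
    have a6: "c / 2 * t = (c * t) / 2" by simp
    have a7: "- L x1 \<le> \<bar>L x1\<bar>" by simp
    define P where "P = c * t"
    define Q where "Q = c * x1"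
    define Qa where "Qa = c * \<bar>x1\<bar>"
    have b1: "2 * L t < P" using a1 a6 unfolding P_def by simp
    have b2: "P - Q \<le> L t - L x1" using a2 a5 unfolding P_def Q_def by simp
    have b3: "2 * \<bar>L x1\<bar> + 2 * Qa + c \<le> P" using a3 unfolding P_def Qa_def by simp
    have b4: "Q \<le> Qa" using a4 unfolding Q_def Qa_def by simp
    show False using b1 b2 b3 b4 a7 c by linarith
  qed
  obtain T1 where T1: "T1 \<ge> T0" and sgn: "(\<forall>x\<ge>T1. g x \<ge> 0) \<or> (\<forall>x\<ge>T1. g x \<le> 0)"
  proof -
    from hardy_sign[OF H gH] show ?thesis
    proof
      assume "eventually (\<lambda>x. g x = 0) at_top"
      then obtain T' where "\<And>x. x \<ge> T' \<Longrightarrow> g x = 0" unfolding eventually_at_top_linorder by blast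
      then show ?thesis using that[of "max T0 T'"] by auto
    next
      assume "eventually (\<lambda>x. g x \<noteq> 0) at_top"
      then obtain T' where T': "\<And>x. x \<ge> T' \<Longrightarrow> g x \<noteq> 0" unfolding eventually_at_top_linorder by blast
      define T1 where "T1 = max T0 T'"
      have "(\<forall>x\<ge>T1. g x \<ge> 0) \<or> (\<forall>x\<ge>T1. g x \<le> 0)"
      proof (rule ccontr)
        assume "\<not> ?thesis"
        then obtain a b where a: "a \<ge> T1" "g a < 0" and b: "b \<ge> T1" "g b > 0" by force
        show False
        proof (cases "a \<le> b")
          case True
          then obtain x where "a \<le> x" "x \<le> b" "g x = 0"
            using IVT'[of g a 0 b] a b gc[of a b] unfolding T1_def by auto
          then show False using T' a unfolding T1_def by auto
        next
          case False
          then obtain x where "b \<le> x" "x \<le> a" "g x = 0"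
            using IVT2'[of g a 0 b] a b gc[of b a] unfolding T1_def by auto
          then show False using T' b unfolding T1_def by auto
        qed
      qed
      then show ?thesis using that[of T1] unfolding T1_def by auto
    qed
  qed
  have main: "\<forall>e>0. \<exists>T'. \<forall>x\<ge>T'. 0 \<le> h x \<and> h x \<le> e"
  proof (cases "\<forall>x\<ge>T1. g x \<ge> 0")
    case True
    have mono: "h x \<le> h y" if "T1 \<le> x" "x \<le> y" for x y
      using mvt_lower[where f = h and f' = g and a = x and b = y and c = 0] that True dh T1 by auto
    have "h t \<le> 0" if "t \<ge> T1" for t
    proof (rule ccontr)
      assume "\<not> h t \<le> 0"
      then show False using L2[of t "h t"] mono that T1 by auto
    qed
    then have False using L1[of T1] T1 by auto
    then show ?thesis ..
  next
    case False
    then have gn: "\<forall>x\<ge>T1. g x \<le> 0" using sgn by blast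
    have anti: "h y \<le> h x" if "T1 \<le> x" "x \<le> y" for x y
      using mvt_upper[where f = h and f' = g and a = x and b = y and c = 0] that gn dh T1 by auto
    have pos: "0 \<le> h t" if "t \<ge> T1" for t
    proof (rule ccontr)
      assume "\<not> 0 \<le> h t"
      then show False using L1[of t] anti that T1 by fastforce
    qed
    show ?thesis
    proof (intro allI impI)
      fix e :: real assume e: "e > 0"
      have "\<exists>x1\<ge>T1. h x1 \<le> e"
      proof (rule ccontr)
        assume "\<not> ?thesis"
        then show False using L2[of T1 e] e T1 by force
      qed
      then obtain x1 where "x1 \<ge> T1" "h x1 \<le> e" by blast
      then show "\<exists>T'. \<forall>x\<ge>T'. 0 \<le> h x \<and> h x \<le> e"
        using pos anti by (intro exI[of _ x1]) (smt (verit))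
    qed
  qed
  show ?thesis using dL main by blast
qed

lemma L_regular:
  fixes L :: "real \<Rightarrow> real"
  assumes H: "hardy_field H" and L_in: "L \<in> H" and Ltop: "filterlim L at_top at_top"
    and L_sub: "((\<lambda>t. L t / t) \<longlongrightarrow> 0) at_top" and e: "e > 0"
  shows "\<exists>T. \<forall>r n. T \<le> r \<longrightarrow> r \<le> n \<longrightarrow> L r \<le> L n \<and> L n - L r \<le> e * (n - r)"
proof -
  obtain h T where dL: "\<forall>x\<ge>T. DERIV L x :> h x" and sm: "\<forall>e>0. \<exists>T'. \<forall>x\<ge>T'. 0 \<le> h x \<and> h x \<le> e"
    using L_deriv_small[OF H L_in Ltop L_sub] by blast
  obtain T' where T': "\<forall>x\<ge>T'. 0 \<le> h x \<and> h x \<le> e" using sm e by blast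
  show ?thesis
  proof (intro exI[of _ "max T T'"] allI impI conjI)
    fix r n :: real assume r: "max T T' \<le> r" and rn: "r \<le> n"
    show "L r \<le> L n"
      using mvt_lower[where f = L and f' = h and a = r and b = n and c = 0] dL T' r rn by auto
    show "L n - L r \<le> e * (n - r)"
      using mvt_upper[where f = L and f' = h and a = r and b = n and c = e] dL T' r rn by auto
  qed
qed


definition Sset :: "(real \<Rightarrow> real) \<Rightarrow> nat \<Rightarrow> nat set" where
  "Sset L r = {n::nat. real r \<le> real n \<and> real n \<le> real r + L (real r)}"

definition cw :: "(real \<Rightarrow> real) \<Rightarrow> nat \<Rightarrow> nat \<Rightarrow> real" where
  "cw L R n = (\<Sum>r=1..R. (if n \<in> Sset L r then 1 / real (card (Sset L r)) else 0))"

lemma short_avg_eq: "short_avg L r a = (1 / real (card (Sset L r))) *\<^sub>R (\<Sum>n\<in>Sset L r. a n)"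
  by (simp add: short_avg_def Sset_def Let_def)

lemma finite_Sset: "finite (Sset L r)"
proof (rule finite_subset[of _ "{..nat \<lceil>real r + L (real r)\<rceil>}"])
  show "Sset L r \<subseteq> {..nat \<lceil>real r + L (real r)\<rceil>}"
  proof
    fix n assume "n \<in> Sset L r"
    then have "real n \<le> real r + L (real r)" by (simp add: Sset_def)
    then have "real_of_int (int n) \<le> real_of_int \<lceil>real r + L (real r)\<rceil>"
      using le_of_int_ceiling[of "real r + L (real r)"] by linarith
    then have "int n \<le> \<lceil>real r + L (real r)\<rceil>" by (simp only: of_int_le_iff)
    then show "n \<in> {..nat \<lceil>real r + L (real r)\<rceil>}" by simp
  qed
qed simp

lemma card_Sset_le:
  assumes "L (real r) \<ge> 0"
  shows "real (card (Sset L r)) \<le> L (real r) + 1"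
proof -
  have "Sset L r \<subseteq> {r..r + nat \<lfloor>L (real r)\<rfloor>}"
  proof
    fix n assume "n \<in> Sset L r"
    then have a: "real r \<le> real n" "real n - real r \<le> L (real r)" by (auto simp: Sset_def)
    then have "int n - int r \<le> \<lfloor>L (real r)\<rfloor>" by (simp add: le_floor_iff)
    then show "n \<in> {r..r + nat \<lfloor>L (real r)\<rfloor>}" using a by auto
  qed
  then have "card (Sset L r) \<le> card {r..r + nat \<lfloor>L (real r)\<rfloor>}" by (intro card_mono) auto
  also have "\<dots> = nat \<lfloor>L (real r)\<rfloor> + 1" by simp
  finally have "real (card (Sset L r)) \<le> real (nat \<lfloor>L (real r)\<rfloor>) + 1" by linarith
  also have "real (nat \<lfloor>L (real r)\<rfloor>) \<le> L (real r)" using assms by linarith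
  finally show ?thesis by simp
qed

lemma cw_nonneg: "cw L R n \<ge> 0"
  unfolding cw_def by (intro sum_nonneg) auto

lemma error_bound:
  fixes a :: "nat \<Rightarrow> 'a::real_normed_vector"
  assumes a: "\<And>n. norm (a n) \<le> 1"
  shows "norm ((\<Sum>n=1..R. a n) - (\<Sum>r=1..R. short_avg L r a)) \<le> 2 * (\<Sum>n=1..R. max (1 - cw L R n) 0)"
proof -
  define V where "V = {1..R} \<union> (\<Union>r\<in>{1..R}. Sset L r)"
  have finV: "finite V" unfolding V_def using finite_Sset by auto
  have SV: "Sset L r \<subseteq> V" if "r \<in> {1..R}" for r using that unfolding V_def by auto
  have RV: "{1..R} \<subseteq> V" unfolding V_def by auto
  define e where "e n = (if n \<in> {1..R} then 1 else 0::real)" for n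
  have s1: "(\<Sum>n=1..R. a n) = (\<Sum>n\<in>V. e n *\<^sub>R a n)"
    unfolding e_def by (rule sum.mono_neutral_cong_left[OF finV RV]) auto
  have s2: "short_avg L r a = (\<Sum>n\<in>V. (if n \<in> Sset L r then 1 / real (card (Sset L r)) else 0) *\<^sub>R a n)"
    if "r \<in> {1..R}" for r
  proof -
    have "(\<Sum>n\<in>V. (if n \<in> Sset L r then 1 / real (card (Sset L r)) else 0) *\<^sub>R a n)
        = (\<Sum>n\<in>Sset L r. (1 / real (card (Sset L r))) *\<^sub>R a n)"
      by (rule sum.mono_neutral_cong_right[OF finV SV[OF that]]) auto
    then show ?thesis by (simp add: short_avg_eq scaleR_sum_right)
  qed
  have s3: "(\<Sum>r=1..R. short_avg L r a) = (\<Sum>n\<in>V. cw L R n *\<^sub>R a n)"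
  proof -
    have "(\<Sum>r=1..R. short_avg L r a) = (\<Sum>r=1..R. \<Sum>n\<in>V. (if n \<in> Sset L r then 1 / real (card (Sset L r)) else 0) *\<^sub>R a n)"
      using s2 by (rule sum.cong[OF refl])
    also have "\<dots> = (\<Sum>n\<in>V. \<Sum>r=1..R. (if n \<in> Sset L r then 1 / real (card (Sset L r)) else 0) *\<^sub>R a n)"
      by (rule sum.swap)
    also have "\<dots> = (\<Sum>n\<in>V. cw L R n *\<^sub>R a n)"
      unfolding cw_def by (simp add: scaleR_sum_left)
    finally show ?thesis .
  qed
  have "(\<Sum>n=1..R. a n) - (\<Sum>r=1..R. short_avg L r a) = (\<Sum>n\<in>V. (e n - cw L R n) *\<^sub>R a n)"
    unfolding s1 s3 by (simp add: sum_subtractf scaleR_diff_left)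
  then have "norm ((\<Sum>n=1..R. a n) - (\<Sum>r=1..R. short_avg L r a)) = norm (\<Sum>n\<in>V. (e n - cw L R n) *\<^sub>R a n)"
    by simp
  also have "\<dots> \<le> (\<Sum>n\<in>V. norm ((e n - cw L R n) *\<^sub>R a n))" by (rule norm_sum)
  also have "\<dots> \<le> (\<Sum>n\<in>V. \<bar>e n - cw L R n\<bar>)"
  proof (rule sum_mono)
    fix n show "norm ((e n - cw L R n) *\<^sub>R a n) \<le> \<bar>e n - cw L R n\<bar>"
      using a[of n] by (simp add: mult_left_le)
  qed
  also have "\<dots> = (\<Sum>n\<in>V. cw L R n) - (\<Sum>n\<in>V. e n) + 2 * (\<Sum>n\<in>V. max (e n - cw L R n) 0)"
  proof -
    have "(\<Sum>n\<in>V. \<bar>e n - cw L R n\<bar>) = (\<Sum>n\<in>V. (cw L R n - e n) + 2 * max (e n - cw L R n) 0)"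
      by (rule sum.cong) (auto simp: abs_if max_def)
    also have "\<dots> = (\<Sum>n\<in>V. cw L R n) - (\<Sum>n\<in>V. e n) + 2 * (\<Sum>n\<in>V. max (e n - cw L R n) 0)"
      by (simp add: sum.distrib sum_subtractf sum_distrib_left)
    finally show ?thesis .
  qed
  also have "(\<Sum>n\<in>V. e n) = real R"
  proof -
    have "(\<Sum>n\<in>V. e n) = (\<Sum>n\<in>{1..R}. 1)" unfolding e_def
      by (rule sum.mono_neutral_cong_right[OF finV RV]) auto
    then show ?thesis by simp
  qed
  also have "(\<Sum>n\<in>V. cw L R n) \<le> real R"
  proof -
    have "(\<Sum>n\<in>V. cw L R n) = (\<Sum>r=1..R. \<Sum>n\<in>V. (if n \<in> Sset L r then 1 / real (card (Sset L r)) else 0))"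
      unfolding cw_def by (rule sum.swap)
    also have "\<dots> \<le> (\<Sum>r=1..R. 1)"
    proof (rule sum_mono)
      fix r assume r: "r \<in> {1..R}"
      have "(\<Sum>n\<in>V. (if n \<in> Sset L r then 1 / real (card (Sset L r)) else 0))
          = (\<Sum>n\<in>Sset L r. 1 / real (card (Sset L r)))"
        by (rule sum.mono_neutral_cong_right[OF finV SV[OF r]]) auto
      also have "\<dots> \<le> 1" by simp
      finally show "(\<Sum>n\<in>V. (if n \<in> Sset L r then 1 / real (card (Sset L r)) else 0)) \<le> 1" .
    qed
    finally show ?thesis by simp
  qed
  also have "(\<Sum>n\<in>V. max (e n - cw L R n) 0) = (\<Sum>n=1..R. max (1 - cw L R n) 0)"
    unfolding e_def by (rule sum.mono_neutral_cong_right[OF finV RV]) (auto simp: cw_nonneg)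
  finally show ?thesis by simp
qed

lemma cw_lower:
  fixes L :: "real \<Rightarrow> real"
  assumes e: "e > 0" and T: "T \<ge> 1"
    and reg: "\<forall>r n. T \<le> r \<longrightarrow> r \<le> n \<longrightarrow> L r \<le> L n \<and> L n - L r \<le> e * (n - r)"
    and nR: "n \<le> R" and Ln: "L (real n) \<ge> 0" and far: "real n - L (real n) \<ge> T"
  shows "cw L R n \<ge> (L (real n) / (1 + e)) / (L (real n) + 1)"
proof -
  define x where "x = L (real n)"
  define k where "k = nat \<lfloor>x / (1 + e)\<rfloor>"
  have xk0: "x / (1 + e) \<ge> 0" using Ln e unfolding x_def by simp
  have k1: "real k \<le> x / (1 + e)" unfolding k_def using xk0 by linarith
  have k2: "x / (1 + e) \<le> real k + 1" unfolding k_def using xk0 by linarith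
  have k3: "x / (1 + e) \<le> x / 1" using e Ln unfolding x_def by (intro divide_left_mono) auto
  then have k3: "x / (1 + e) \<le> x" by simp
  have kx: "(1 + e) * real k \<le> x" using k1 e by (simp add: field_simps)
  have kn: "real k \<le> real n - T" using k1 k3 far unfolding x_def by linarith
  then have kn': "k < n" using T by linarith
  define J where "J = {n - k..n}"
  have JR: "J \<subseteq> {1..R}" unfolding J_def using kn' nR by auto
  have termlb: "1 / (x + 1) \<le> (if n \<in> Sset L r then 1 / real (card (Sset L r)) else 0)" if r: "r \<in> J" for r
  proof -
    have r1: "n - k \<le> r" "r \<le> n" using r unfolding J_def by auto
    have rr: "real r \<ge> real n - real k" using r1 by linarith
    then have rT: "real r \<ge> T" using kn by linarith
    have nr: "real n - real r \<le> real k" using rr by linarith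
    have reg1: "L (real r) \<le> x" and reg2: "x - L (real r) \<le> e * (real n - real r)"
      using reg rT r1 unfolding x_def by auto
    have "e * (real n - real r) \<le> e * real k" using nr e by (intro mult_left_mono) auto
    then have Lr: "L (real r) \<ge> real k" using reg2 kx by (simp add: algebra_simps)
    then have inS: "n \<in> Sset L r" using nr r1 unfolding Sset_def by auto
    have "card (Sset L r) > 0" using inS finite_Sset card_gt_0_iff by blast
    moreover have "real (card (Sset L r)) \<le> x + 1"
      using card_Sset_le[of L r] Lr reg1 by simp
    ultimately have "1 / (x + 1) \<le> 1 / real (card (Sset L r))"
      by (intro divide_left_mono) auto
    then show ?thesis using inS by simp
  qed
  have "(L (real n) / (1 + e)) / (L (real n) + 1) \<le> (real k + 1) / (x + 1)"
    using k2 Ln unfolding x_def by (intro divide_right_mono) auto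
  also have "\<dots> = (\<Sum>r\<in>J. 1 / (x + 1))"
    unfolding J_def using kn' by simp
  also have "\<dots> \<le> (\<Sum>r\<in>J. (if n \<in> Sset L r then 1 / real (card (Sset L r)) else 0))"
    by (rule sum_mono) (rule termlb)
  also have "\<dots> \<le> cw L R n"
    unfolding cw_def by (rule sum_mono2[OF _ JR]) auto
  finally show ?thesis .
qed

lemma power_mean_le:
  fixes x :: "nat \<Rightarrow> real"
  assumes R: "R \<ge> 1" and x: "\<And>r. x r \<ge> 0"
  shows "((1 / real R) * (\<Sum>r=1..R. x r)) ^ d \<le> (1 / real R) * (\<Sum>r=1..R. x r ^ d)"
proof -
  have cv: "convex_on {0::real..} (\<lambda>t. t ^ d)"
  proof (cases "even d")
    case True
    then show ?thesis using convex_power_even convex_on_subset by blast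
  next
    case False
    then show ?thesis using convex_power_odd by blast
  qed
  have "(\<lambda>t. t ^ d) (\<Sum>r\<in>{1..R}. (1 / real R) *\<^sub>R x r) \<le> (\<Sum>r\<in>{1..R}. (1 / real R) * (x r ^ d))"
    by (rule convex_on_sum[OF _ _ cv]) (use R x in auto)
  then show ?thesis by (simp add: sum_distrib_left)
qed


lemma frac_bound:
  fixes x eps :: real
  assumes eps: "eps > 0" and x: "x \<ge> 2 / eps"
  shows "(x / (1 + eps / 2)) / (x + 1) \<ge> 1 - eps"
proof -
  have x0: "x > 0" using x eps by (smt (verit) divide_pos_pos)
  have ex: "eps * x \<ge> 2" using x eps by (simp add: field_simps)
  have q: "(1 - eps) * (1 + eps / 2) \<le> 1 - eps / 2"
    using eps by (simp add: algebra_simps power2_eq_square)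
  have "(1 - eps) * (1 + eps / 2) * (x + 1) \<le> (1 - eps / 2) * (x + 1)"
    using q x0 by (intro mult_right_mono) auto
  also have "\<dots> = x + 1 - (eps * x) / 2 - eps / 2" by (simp add: algebra_simps)
  also have "\<dots> \<le> x" using ex eps by simp
  finally have *: "(1 - eps) * ((1 + eps / 2) * (x + 1)) \<le> x" by (simp add: mult.assoc)
  have pos: "(1 + eps / 2) * (x + 1) > 0" using eps x0 by simp
  have "(x / (1 + eps / 2)) / (x + 1) = x / ((1 + eps / 2) * (x + 1))" by simp
  also have "1 - eps \<le> x / ((1 + eps / 2) * (x + 1))"
    using * pos by (simp add: le_divide_eq)
  finally show ?thesis by simp
qed

theorem lemma3p3:
  fixes H :: "(real \<Rightarrow> real) set"
    and A :: "nat \<Rightarrow> nat \<Rightarrow> 'a::real_normed_vector"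
    and L :: "real \<Rightarrow> real"
    and d :: nat and C :: real
  assumes H: "standing_hardy_field H"
    and d: "d > 0"
    and A_bound: "\<And>R n. norm (A R n) \<le> 1"
    and L_in: "L \<in> H"
    and L_pos: "eventually (\<lambda>t. L t > 0) at_top"
    and L_grow: "((\<lambda>t. 1 / L t) \<longlongrightarrow> 0) at_top"
    and L_sub: "((\<lambda>t. L t / t) \<longlongrightarrow> 0) at_top"
    and C: "C > 0"
    and hyp: "limsup (\<lambda>R. ereal ((1 / real R) *
                 (\<Sum>r=1..R. norm (short_avg L r (A R)) ^ d))) \<le> ereal C"
  shows "limsup (\<lambda>R. ereal (norm (avg_upto R (A R)))) \<le> ereal (C powr (1 / real d))"
proof -
  have Hf: "hardy_field H" using H unfolding standing_hardy_field_def by blast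
  have Ltop: "filterlim L at_top at_top"
  proof -
    have "filterlim (\<lambda>t. inverse (1 / L t)) at_top at_top"
      by (rule filterlim_inverse_at_top[OF L_grow]) (use L_pos in \<open>auto elim: eventually_mono\<close>)
    then show ?thesis by simp
  qed
  define Cp where "Cp = C powr (1 / real d)"
  have Cp_pos: "Cp > 0" unfolding Cp_def using C by simp
  have CpD: "Cp ^ d = C"
  proof -
    have "Cp ^ d = Cp powr real d" using Cp_pos by (simp add: powr_realpow)
    also have "\<dots> = C powr (1 / real d * real d)" unfolding Cp_def by (simp add: powr_powr)
    also have "\<dots> = C" using d C by simp
    finally show ?thesis .
  qed
  have key: "eventually (\<lambda>R. norm (avg_upto R (A R)) \<le> Cp + e) sequentially" if e: "e > 0" for e
  proof -
    define z where "z = Cp + e / 2"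
    have z0: "z > 0" and Cpz: "Cp < z" unfolding z_def using Cp_pos e by auto
    have zC: "C < z ^ d" using power_strict_mono[OF Cpz _ d] Cp_pos CpD by simp
    have "limsup (\<lambda>R. ereal ((1 / real R) * (\<Sum>r=1..R. norm (short_avg L r (A R)) ^ d))) < ereal (z ^ d)"
      using hyp zC by (simp add: le_less_trans)
    from Limsup_lessD[OF this]
    have ev1: "eventually (\<lambda>R. (1 / real R) * (\<Sum>r=1..R. norm (short_avg L r (A R)) ^ d) < z ^ d) sequentially"
      by simp
    define eps where "eps = e / 8"
    have eps: "eps > 0" unfolding eps_def using e by simp
    obtain T0 where T0: "\<forall>r n. T0 \<le> r \<longrightarrow> r \<le> n \<longrightarrow> L r \<le> L n \<and> L n - L r \<le> (eps / 2) * (n - r)"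
      using L_regular[OF Hf L_in Ltop L_sub, of "eps / 2"] eps by auto
    define T where "T = max T0 1"
    have T1: "T \<ge> 1" unfolding T_def by simp
    have reg: "\<forall>r n. T \<le> r \<longrightarrow> r \<le> n \<longrightarrow> L r \<le> L n \<and> L n - L r \<le> (eps / 2) * (n - r)"
      using T0 unfolding T_def by auto
    have evL: "eventually (\<lambda>t. L t \<ge> 2 / eps) at_top"
      using Ltop by (simp add: filterlim_at_top)
    have evS: "eventually (\<lambda>t. L t / t < 1 / 2) at_top"
      using L_sub by (intro order_tendstoD) auto
    have evT: "eventually (\<lambda>t. t \<ge> 2 * T) at_top" by (rule eventually_ge_at_top)
    obtain X where X: "\<And>t. t \<ge> X \<Longrightarrow> L t \<ge> 2 / eps \<and> L t / t < 1 / 2 \<and> t \<ge> 2 * T"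
      using eventually_conj[OF evL eventually_conj[OF evS evT]] unfolding eventually_at_top_linorder by blast
    define n0 where "n0 = nat \<lceil>X\<rceil> + 1"
    have n0_1: "n0 \<ge> 1" unfolding n0_def by simp
    have cwb: "cw L R n \<ge> 1 - eps" if n: "n \<ge> n0" "n \<le> R" for n R
    proof -
      have nX: "real n \<ge> X" using n unfolding n0_def by linarith
      from X[OF nX] have x1: "L (real n) \<ge> 2 / eps" and x2: "L (real n) / real n < 1 / 2"
        and x3: "real n \<ge> 2 * T" by auto
      have npos: "real n > 0" using x3 T1 by simp
      have "L (real n) < real n / 2" using x2 npos by (simp add: divide_less_eq)
      then have far: "real n - L (real n) \<ge> T" using x3 by simp
      have Ln: "L (real n) \<ge> 0" using x1 eps by (smt (verit) divide_pos_pos)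
      have "cw L R n \<ge> (L (real n) / (1 + eps / 2)) / (L (real n) + 1)"
        by (rule cw_lower[OF _ T1 reg n(2) Ln far]) (use eps in simp)
      moreover have "(L (real n) / (1 + eps / 2)) / (L (real n) + 1) \<ge> 1 - eps"
        by (rule frac_bound[OF eps x1])
      ultimately show ?thesis by simp
    qed
    have errb: "(\<Sum>n=1..R. max (1 - cw L R n) 0) \<le> real n0 + eps * real R" for R
    proof -
      have "(\<Sum>n=1..R. max (1 - cw L R n) 0) \<le> (\<Sum>n=1..R. (if n < n0 then 1 else 0) + eps)"
      proof (rule sum_mono)
        fix n assume n: "n \<in> {1..R}"
        show "max (1 - cw L R n) 0 \<le> (if n < n0 then 1 else 0) + eps"
        proof (cases "n < n0")
          case True then show ?thesis using cw_nonneg[of L R n] eps by simp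
        next
          case False then show ?thesis using cwb[of n R] n eps by simp
        qed
      qed
      also have "\<dots> = (\<Sum>n=1..R. (if n < n0 then 1 else 0)) + eps * real R"
        by (simp add: sum.distrib)
      also have "(\<Sum>n=1..R. (if n < n0 then 1 else 0::real)) \<le> (\<Sum>n<n0. 1)"
      proof -
        have "(\<Sum>n=1..R. (if n < n0 then 1 else 0::real)) = (\<Sum>n\<in>{1..R} \<inter> {..<n0}. 1)"
          using sum.inter_restrict[of "{1..R}" "\<lambda>_. 1::real" "{..<n0}"] by simp
        also have "\<dots> \<le> (\<Sum>n<n0. 1)" by (rule sum_mono2) auto
        finally show ?thesis .
      qed
      finally show ?thesis by simp
    qed
    have evR: "eventually (\<lambda>R. real R \<ge> max 1 (real n0 / eps)) sequentially"
      using eventually_ge_at_top[of "nat \<lceil>max 1 (real n0 / eps)\<rceil>"]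
      by (auto elim!: eventually_mono)
    show ?thesis
      using eventually_conj[OF ev1 evR]
    proof (rule eventually_mono, elim conjE)
      fix R assume h1: "(1 / real R) * (\<Sum>r=1..R. norm (short_avg L r (A R)) ^ d) < z ^ d"
        and h2: "real R \<ge> max 1 (real n0 / eps)"
      have R1: "real R \<ge> 1" and R2: "real R \<ge> real n0 / eps" using h2 by auto
      have Rpos: "real R > 0" using R1 by simp
      define a where "a = A R"
      have abound: "\<And>n. norm (a n) \<le> 1" unfolding a_def by (rule A_bound)
      define m where "m = (1 / real R) * (\<Sum>r=1..R. norm (short_avg L r a))"
      have "m ^ d \<le> (1 / real R) * (\<Sum>r=1..R. norm (short_avg L r a) ^ d)"
        unfolding m_def using R1 by (intro power_mean_le) auto
      also have "\<dots> < z ^ d" using h1 unfolding a_def .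
      finally have "m ^ d < z ^ d" .
      then have mz: "m < z" using z0 by (meson power_less_imp_less_base less_imp_le)
      define err where "err = norm ((\<Sum>n=1..R. a n) - (\<Sum>r=1..R. short_avg L r a))"
      have err1: "err \<le> 2 * (real n0 + eps * real R)"
      proof -
        have "err \<le> 2 * (\<Sum>n=1..R. max (1 - cw L R n) 0)"
          unfolding err_def by (rule error_bound) (rule abound)
        then show ?thesis using errb[of R] by simp
      qed
      have "real n0 \<le> eps * real R" using R2 eps by (simp add: divide_le_eq mult.commute)
      then have err2: "err \<le> 4 * eps * real R" using err1 by simp
      have "norm (\<Sum>n=1..R. a n) \<le> norm (\<Sum>r=1..R. short_avg L r a) + err"
        unfolding err_def by (rule norm_triangle_sub)
      also have "norm (\<Sum>r=1..R. short_avg L r a) \<le> (\<Sum>r=1..R. norm (short_avg L r a))"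
        by (rule norm_sum)
      finally have "norm (\<Sum>n=1..R. a n) \<le> (\<Sum>r=1..R. norm (short_avg L r a)) + err" by simp
      then have "norm (\<Sum>n=1..R. a n) / real R \<le> ((\<Sum>r=1..R. norm (short_avg L r a)) + err) / real R"
        using Rpos by (intro divide_right_mono) auto
      also have "\<dots> = m + err / real R" unfolding m_def using Rpos by (simp add: field_simps)
      also have "err / real R \<le> 4 * eps" using err2 Rpos by (simp add: divide_le_eq)
      finally have "norm (\<Sum>n=1..R. a n) / real R \<le> m + 4 * eps" by simp
      moreover have "norm (avg_upto R (A R)) = norm (\<Sum>n=1..R. a n) / real R"
        unfolding avg_upto_def a_def by simp
      ultimately show "norm (avg_upto R (A R)) \<le> Cp + e"
        using mz unfolding z_def eps_def by simp
    qed
  qed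
  show ?thesis
  proof (rule ereal_le_epsilon2)
    fix e :: real assume e: "e > 0"
    have "limsup (\<lambda>R. ereal (norm (avg_upto R (A R)))) \<le> ereal (Cp + e)"
      by (rule Limsup_bounded) (use key[OF e] in \<open>auto elim: eventually_mono\<close>)
    then show "limsup (\<lambda>R. ereal (norm (avg_upto R (A R)))) \<le> ereal (C powr (1 / real d)) + ereal e"
      unfolding Cp_def by simp
  qed
qed

end
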